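(* Let $f:\mathbb{R}^n\to\mathbb{R}\cup\{+\infty\}$ be closed and convex, let $X\in\mathbb{R}^{n\times m}$ have rank $r$ with compact SVD $X=U_r\Sigma_r V_r^\top$, let $\gamma>0$, $k\ge0$. For an integer $q\ge0$ define $$p^*_{\rm con}(q)=\min_{w\in\mathbb{R}^m}\ f(Xw)\quad\text{s.t.}\quad \|w\|_0\le q,\ \|w\|_2^2\le\gamma,$$ $$p^{**}_{\rm con}(k)=\min_{v\in\mathbb{R}^m,\ u\in[0,1]^m}\ f(XD(u)v)\quad\text{s.t.}\quad \mathbf 1^\top u\le k,\ v^\top D(u)v\le\gamma .$$ Let $(v^*,u^* )$ be an optimal solution of the latter with optimal value $t^*$, let $z^*=\Sigma_rV_r^\top D(u^* )v^*$, let $\ell_i$ be the $i$-th column of $\Sigma_rV_r^\top$, let $c\sim\mathcal N(0,I_m)$, and consider the linear program in $u\in\mathbb{R}^m$: $$\min\ c^\top u\quad\text{s.t.}\quad \sum_{i=1}^m u_i\le k,\quad \sum_{i=1}^m u_i(v_i^* )^2\le\gamma,\quad \sum_{i=1}^m u_i\ell_iv_i^*=z^*,\quad u\in[0,1]^m.$$ Then, with probability one, from an optimal basic feasible solution $\bar u$ of this linear program one can construct the point $w=D(\bar u)v^*$ (with $S=\{i:\bar u_i\notin\{0,1\}\}$, $\tilde u_i=1,\tilde v_i=\bar u_iv_i^*$ for $i\in S$, $\tilde u_i=\bar u_i,\tilde v_i=v_i^*$ otherwise, $w=D(\tilde u)\tilde v$), whose objective value $\mathrm{OPT}=f(Xw)$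 satisfies $$p^*_{\rm con}(k+r+2)-\rho(f)\le\mathrm{OPT}\le p^{**}_{\rm con}(k)\le p^*_{\rm con}(k),$$ where $\rho(f)=\sup_{w}\big(f(Xw)-f^{**}(Xw)\big)\ge0$.
   Context: $\|w\|_0$ is the number of nonzero entries of $w$; $D(u)=\mathrm{diag}(u_1,\dots,u_m)$; $\mathbf 1$ is the all-ones vector. $f^*(y)=\sup_x x^\top y-f(x)$ is the convex conjugate and $f^{**}$ the biconjugate (convex envelope) of $f$; for closed convex $f$, $f^{**}=f$. *)

theory Defs
  imports "HOL-Analysis.Analysis" "HOL-Probability.Probability"
begin

text \<open>Extended-valued functions R^n -> R \<union> {+\<infinity>} are modelled as ereal-valued
functions never taking the value -\<infinity>.\<close>

definition closed_convex_fun :: "(real^'n \<Rightarrow> ereal) \<Rightarrow> bool" where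
  "closed_convex_fun f \<longleftrightarrow> (\<forall>x. f x \<noteq> -\<infinity>) \<and>
     convex {(x, t::real). f x \<le> ereal t} \<and> closed {(x, t::real). f x \<le> ereal t}"

definition conj_fun :: "(real^'n \<Rightarrow> ereal) \<Rightarrow> real^'n \<Rightarrow> ereal" where
  "conj_fun f y = (SUP x. ereal (x \<bullet> y) - f x)"

definition biconj_fun :: "(real^'n \<Rightarrow> ereal) \<Rightarrow> real^'n \<Rightarrow> ereal" where
  "biconj_fun f = conj_fun (conj_fun f)"

text \<open>rho(f) = sup_w (f(Xw) - f**(Xw)), with the convention (+\<infinity>) - (+\<infinity>) = 0.\<close>
definition rho :: "(real^'n \<Rightarrow> ereal) \<Rightarrow> real^'m^'n \<Rightarrow> ereal" where
  "rho f X = (SUP w. (if f (X *v w) = \<infinity> \<and> biconj_fun f (X *v w) = \<infinity> then 0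
                      else f (X *v w) - biconj_fun f (X *v w)))"

definition l0norm :: "real^'m \<Rightarrow> nat" where
  "l0norm w = card {i. w $ i \<noteq> 0}"

definition diagm :: "real^'m \<Rightarrow> real^'m^'m" where
  "diagm u = (\<chi> i j. if i = j then u $ i else 0)"

definition p_con :: "(real^'n \<Rightarrow> ereal) \<Rightarrow> real^'m^'n \<Rightarrow> real \<Rightarrow> nat \<Rightarrow> ereal" where
  "p_con f X \<gamma> q = (INF w \<in> {w. l0norm w \<le> q \<and> (norm w)^2 \<le> \<gamma>}. f (X *v w))"

definition relax_feasible :: "real \<Rightarrow> real \<Rightarrow> real^'m \<Rightarrow> real^'m \<Rightarrow> bool" where
  "relax_feasible k \<gamma> v u \<longleftrightarrow> (\<forall>i. 0 \<le> u $ i \<and> u $ i \<le> 1) \<and>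
      (\<Sum>i\<in>UNIV. u $ i) \<le> k \<and> v \<bullet> (diagm u *v v) \<le> \<gamma>"

definition p_relax :: "(real^'n \<Rightarrow> ereal) \<Rightarrow> real^'m^'n \<Rightarrow> real \<Rightarrow> nat \<Rightarrow> ereal" where
  "p_relax f X \<gamma> k = (INF (v, u) \<in> {(v, u). relax_feasible (real k) \<gamma> v u}.
                         f (X *v (diagm u *v v)))"

text \<open>Compact SVD X = U_r \<Sigma>_r V_r^T: columns U j, V j and singular values \<sigma> j for j < r.\<close>
definition compact_svd :: "real^'m^'n \<Rightarrow> nat \<Rightarrow> (nat \<Rightarrow> real^'n) \<Rightarrow> (nat \<Rightarrow> real)
     \<Rightarrow> (nat \<Rightarrow> real^'m) \<Rightarrow> bool" where
  "compact_svd X r U \<sigma> V \<longleftrightarrow>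
     (\<forall>j<r. \<forall>j'<r. U j \<bullet> U j' = (if j = j' then 1 else 0) \<and>
                    V j \<bullet> V j' = (if j = j' then 1 else 0)) \<and>
     (\<forall>j<r. \<sigma> j > 0) \<and>
     (\<forall>a b. X $ a $ b = (\<Sum>j<r. U j $ a * \<sigma> j * V j $ b))"

text \<open>The linear program in u, given c, k, \<gamma>, v*, the columns \<ell>_i of \<Sigma>_r V_r^T
  (stored as L j i = (\<ell>_i)_j for j < r) and z*.\<close>
definition lp_feasible :: "real \<Rightarrow> real \<Rightarrow> real^'m \<Rightarrow> nat \<Rightarrow> (nat \<Rightarrow> 'm \<Rightarrow> real)
     \<Rightarrow> (nat \<Rightarrow> real) \<Rightarrow> real^'m \<Rightarrow> bool" where
  "lp_feasible k \<gamma> vs r L z u \<longleftrightarrow>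
     (\<Sum>i\<in>UNIV. u $ i) \<le> k \<and> (\<Sum>i\<in>UNIV. u $ i * (vs $ i)^2) \<le> \<gamma> \<and>
     (\<forall>j<r. (\<Sum>i\<in>UNIV. u $ i * L j i * vs $ i) = z j) \<and>
     (\<forall>i. 0 \<le> u $ i \<and> u $ i \<le> 1)"

text \<open>Basic feasible solution: feasible, and the normals of the active constraints
  (all equality constraints plus the tight inequality constraints) span R^m.\<close>
definition lp_active_normals :: "real \<Rightarrow> real \<Rightarrow> real^'m \<Rightarrow> nat \<Rightarrow> (nat \<Rightarrow> 'm \<Rightarrow> real)
     \<Rightarrow> real^'m \<Rightarrow> (real^'m) set" where
  "lp_active_normals k \<gamma> vs r L u =
     {(\<chi> i. L j i * vs $ i) | j. j < r} \<union>
     (if (\<Sum>i\<in>UNIV. u $ i) = k then {(\<chi> i. 1)} else {}) \<union>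
     (if (\<Sum>i\<in>UNIV. u $ i * (vs $ i)^2) = \<gamma> then {(\<chi> i. (vs $ i)^2)} else {}) \<union>
     {axis i 1 | i. u $ i = 0 \<or> u $ i = 1}"

definition lp_bfs :: "real \<Rightarrow> real \<Rightarrow> real^'m \<Rightarrow> nat \<Rightarrow> (nat \<Rightarrow> 'm \<Rightarrow> real)
     \<Rightarrow> (nat \<Rightarrow> real) \<Rightarrow> real^'m \<Rightarrow> bool" where
  "lp_bfs k \<gamma> vs r L z u \<longleftrightarrow> lp_feasible k \<gamma> vs r L z u \<and>
     span (lp_active_normals k \<gamma> vs r L u) = UNIV"

definition lp_optimal :: "real^'m \<Rightarrow> real \<Rightarrow> real \<Rightarrow> real^'m \<Rightarrow> nat \<Rightarrow> (nat \<Rightarrow> 'm \<Rightarrow> real)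
     \<Rightarrow> (nat \<Rightarrow> real) \<Rightarrow> real^'m \<Rightarrow> bool" where
  "lp_optimal c k \<gamma> vs r L z u \<longleftrightarrow> lp_feasible k \<gamma> vs r L z u \<and>
     (\<forall>u'. lp_feasible k \<gamma> vs r L z u' \<longrightarrow> c \<bullet> u \<le> c \<bullet> u')"

definition std_gaussian :: "(real^'m) measure" where
  "std_gaussian = density lborel (\<lambda>c. ennreal (\<Prod>i\<in>UNIV. std_normal_density (c $ i)))"

definition round_point :: "real^'m \<Rightarrow> real^'m \<Rightarrow> real^'m" where
  "round_point ub vs =
     (let S = {i. ub $ i \<notin> {0, 1}};
          ut = (\<chi> i. if i \<in> S then 1 else ub $ i);
          vt = (\<chi> i. if i \<in> S then ub $ i * vs $ i else vs $ i)
      in diagm ut *v vt)"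

end

theory Submission
  imports Defs
begin

lemma diagm_nth: "(diagm u *v v) $ i = u $ i * v $ i"
  unfolding diagm_def matrix_vector_mult_def
  by (simp add: if_distrib[of "\<lambda>x. x * _"] cong: if_cong)

lemma round_point_nth: "(round_point ub vs) $ i = ub $ i * vs $ i"
  unfolding round_point_def Let_def diagm_nth by auto

lemma svd_mult:
  assumes "compact_svd X r U \<sigma> V"
  shows "(X *v w) $ a = (\<Sum>j<r. U j $ a * (\<Sum>b\<in>UNIV. \<sigma> j * V j $ b * w $ b))"
proof -
  have "(X *v w) $ a = (\<Sum>b\<in>UNIV. (\<Sum>j<r. U j $ a * \<sigma> j * V j $ b) * w $ b)"
    using assms unfolding compact_svd_def matrix_vector_mult_def by simp
  also have "\<dots> = (\<Sum>b\<in>UNIV. \<Sum>j<r. U j $ a * (\<sigma> j * V j $ b * w $ b))"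
    by (simp add: sum_distrib_right mult.assoc)
  also have "\<dots> = (\<Sum>j<r. \<Sum>b\<in>UNIV. U j $ a * (\<sigma> j * V j $ b * w $ b))"
    by (rule sum.swap)
  also have "\<dots> = (\<Sum>j<r. U j $ a * (\<Sum>b\<in>UNIV. \<sigma> j * V j $ b * w $ b))"
    by (simp add: sum_distrib_left)
  finally show ?thesis .
qed

lemma lp_feasible_inner:
  "lp_feasible k \<gamma> vs r L z u \<longleftrightarrow>
    (\<chi> i. 1) \<bullet> u \<le> k \<and> (\<chi> i. (vs $ i)^2) \<bullet> u \<le> \<gamma> \<and>
    (\<forall>j<r. (\<chi> i. L j i * vs $ i) \<bullet> u = z j) \<and> u \<in> cbox 0 (\<chi> i. 1)"
  unfolding lp_feasible_def inner_vec_def mem_box_cart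
  by (simp add: mult.commute mult.left_commute)

lemma lp_set_eq:
  "{u. lp_feasible k \<gamma> vs r L z u} =
    {u. (\<chi> i. 1) \<bullet> u \<le> k} \<inter> {u. (\<chi> i. (vs $ i)^2) \<bullet> u \<le> \<gamma>} \<inter>
    (\<Inter>j\<in>{..<r}. {u. (\<chi> i. L j i * vs $ i) \<bullet> u = z j}) \<inter> cbox 0 (\<chi> i. 1)"
  unfolding lp_feasible_inner by auto

lemma lp_compact: "compact {u. lp_feasible k \<gamma> vs r L z u}"
  unfolding lp_set_eq
  by (subst Int_commute, intro compact_Int_closed compact_cbox closed_Int closed_INT
        closed_halfspace_le closed_hyperplane ballI)

lemma lp_convex: "convex {u. lp_feasible k \<gamma> vs r L z u}"
  unfolding lp_set_eq
  by (intro convex_Int convex_INT convex_halfspace_le convex_hyperplane convex_box)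

lemma ev_lt: "(a::real) < b \<Longrightarrow> \<forall>\<^sub>F t in at (0::real). a + t * c < b"
proof -
  assume "a < b"
  have "((\<lambda>t. a + t*c) \<longlongrightarrow> a + 0 * c) (at (0::real))" by (intro tendsto_intros)
  then show ?thesis using \<open>a < b\<close> by (auto dest: order_tendstoD)
qed

lemma ev_gt: "(a::real) > b \<Longrightarrow> \<forall>\<^sub>F t in at (0::real). a + t * c > b"
proof -
  assume "a > b"
  have "((\<lambda>t. a + t*c) \<longlongrightarrow> a + 0 * c) (at (0::real))" by (intro tendsto_intros)
  then show ?thesis using \<open>a > b\<close> by (auto dest: order_tendstoD)
qed

lemma extreme_bfs:
  fixes u :: "real^'m"
  assumes opt: "lp_optimal c k \<gamma> vs r L z u"
    and ext: "u extreme_point_of {x. lp_optimal c k \<gamma> vs r L z x}"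
  shows "span (lp_active_normals k \<gamma> vs r L u) = UNIV"
proof (rule ccontr)
  let ?A = "lp_active_normals k \<gamma> vs r L u"
  define one :: "real^'m" where "one = (\<chi> i. 1)"
  define q :: "real^'m" where "q = (\<chi> i. (vs $ i)^2)"
  define a :: "nat \<Rightarrow> real^'m" where "a = (\<lambda>j. \<chi> i. L j i * vs $ i)"
  assume "span ?A \<noteq> UNIV"
  then have "span ?A \<subset> span UNIV" by auto
  then obtain d :: "real^'m" where d0: "d \<noteq> 0" and orth: "\<And>y. y \<in> span ?A \<Longrightarrow> orthogonal d y"
    by (rule orthogonal_to_subspace_exists_gen) blast
  have orthA: "d \<bullet> y = 0" if "y \<in> ?A" for y
    using orth[OF span_base[OF that]] by (simp add: orthogonal_def)
  have feas: "lp_feasible k \<gamma> vs r L z u" using opt by (simp add: lp_optimal_def)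
  have sum1: "(\<Sum>i\<in>UNIV. u $ i) = one \<bullet> u" by (simp add: one_def inner_vec_def)
  have sum2: "(\<Sum>i\<in>UNIV. u $ i * (vs $ i)^2) = q \<bullet> u" by (simp add: q_def inner_vec_def mult.commute)
  have e1: "one \<bullet> u = k \<Longrightarrow> one \<bullet> d = 0"
    using orthA[of one] unfolding lp_active_normals_def sum1 one_def by (auto simp: inner_commute)
  have e2: "q \<bullet> u = \<gamma> \<Longrightarrow> q \<bullet> d = 0"
    using orthA[of q] unfolding lp_active_normals_def sum2 q_def by (auto simp: inner_commute)
  have e3: "a j \<bullet> d = 0" if "j < r" for j
    using orthA[of "a j"] that unfolding lp_active_normals_def a_def by (auto simp: inner_commute)
  have e4: "d $ i = 0" if "u $ i = 0 \<or> u $ i = 1" for i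
    using orthA[of "axis i 1"] that unfolding lp_active_normals_def by (auto simp: inner_axis)
  have F: "one \<bullet> u \<le> k" "q \<bullet> u \<le> \<gamma>" "\<And>j. j < r \<Longrightarrow> a j \<bullet> u = z j" "\<And>i. 0 \<le> u $ i \<and> u $ i \<le> 1"
    using feas unfolding lp_feasible_inner one_def q_def a_def mem_box_cart by auto
  have ev: "\<forall>\<^sub>F t in at (0::real). lp_feasible k \<gamma> vs r L z (u + t *\<^sub>R d)"
  proof -
    have c1: "\<forall>\<^sub>F t in at (0::real). one \<bullet> u + t * (one \<bullet> d) \<le> k"
    proof (cases "one \<bullet> d = 0")
      case True then show ?thesis using F(1) by simp
    next
      case False then have "one \<bullet> u < k" using e1 F(1) by fastforce
      then show ?thesis by (rule eventually_mono[OF ev_lt[where c="one \<bullet> d"]]) simp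
    qed
    have c2: "\<forall>\<^sub>F t in at (0::real). q \<bullet> u + t * (q \<bullet> d) \<le> \<gamma>"
    proof (cases "q \<bullet> d = 0")
      case True then show ?thesis using F(2) by simp
    next
      case False then have "q \<bullet> u < \<gamma>" using e2 F(2) by fastforce
      then show ?thesis by (rule eventually_mono[OF ev_lt[where c="q \<bullet> d"]]) simp
    qed
    have c4: "\<forall>\<^sub>F t in at (0::real). \<forall>i. 0 \<le> u $ i + t * d $ i \<and> u $ i + t * d $ i \<le> 1"
    proof (rule eventually_all_finite)
      fix i
      show "\<forall>\<^sub>F t in at (0::real). 0 \<le> u $ i + t * d $ i \<and> u $ i + t * d $ i \<le> 1"
      proof (cases "d $ i = 0")
        case True then show ?thesis using F(4)[of i] by simp
      next
        case False then have "0 < u $ i" "u $ i < 1" using e4[of i] F(4)[of i] by force+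
        then show ?thesis
          by (rule eventually_mono[OF eventually_conj[OF ev_gt[where c="d $ i"] ev_lt[where c="d $ i"]]]) auto
      qed
    qed
    show ?thesis
      using c1 c2 c4
    proof eventually_elim
      case (elim t)
      then show ?case
        unfolding lp_feasible_inner mem_box_cart
        using F(3) e3 by (auto simp: inner_add_right one_def q_def a_def)
    qed
  qed
  then obtain \<epsilon> :: real where \<epsilon>: "\<epsilon> > 0"
    and \<epsilon>f: "\<And>t. t \<noteq> 0 \<Longrightarrow> \<bar>t\<bar> < \<epsilon> \<Longrightarrow> lp_feasible k \<gamma> vs r L z (u + t *\<^sub>R d)"
    unfolding eventually_at dist_real_def by auto
  define t where "t = \<epsilon> / 2"
  have t: "t > 0" "t < \<epsilon>" using \<epsilon> by (auto simp: t_def)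
  have f1: "lp_feasible k \<gamma> vs r L z (u + t *\<^sub>R d)" using \<epsilon>f[of t] t by auto
  have f2: "lp_feasible k \<gamma> vs r L z (u + (-t) *\<^sub>R d)" using \<epsilon>f[of "-t"] t by auto
  have "c \<bullet> u \<le> c \<bullet> (u + t *\<^sub>R d)" "c \<bullet> u \<le> c \<bullet> (u + (-t) *\<^sub>R d)"
    using opt f1 f2 by (auto simp: lp_optimal_def)
  then have "t * (c \<bullet> d) \<ge> 0" "t * (c \<bullet> d) \<le> 0" by (auto simp: inner_add_right inner_diff_right)
  then have cd: "c \<bullet> d = 0" using t by (simp add: mult_le_0_iff zero_le_mult_iff)
  have o1: "lp_optimal c k \<gamma> vs r L z (u + t *\<^sub>R d)"
    using opt f1 cd by (auto simp: lp_optimal_def inner_add_right)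
  have o2: "lp_optimal c k \<gamma> vs r L z (u + (-t) *\<^sub>R d)"
    using opt f2 cd by (auto simp: lp_optimal_def inner_add_right inner_diff_right)
  have mid: "midpoint (u + (-t) *\<^sub>R d) (u + t *\<^sub>R d) = u"
    by (simp add: midpoint_def scaleR_add_right)
  have ne: "u + (-t) *\<^sub>R d \<noteq> u + t *\<^sub>R d"
  proof
    assume "u + (-t) *\<^sub>R d = u + t *\<^sub>R d"
    then have "(u + t *\<^sub>R d) - (u + (-t) *\<^sub>R d) = 0" by simp
    moreover have "(u + t *\<^sub>R d) - (u + (-t) *\<^sub>R d) = (t + t) *\<^sub>R d" by (simp only: scaleR_add_left scaleR_minus_left) (simp add: algebra_simps del: scaleR_add_left)
    ultimately show False using t d0 by simp
  qed
  have "u \<in> open_segment (u + (-t) *\<^sub>R d) (u + t *\<^sub>R d)"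
    using midpoint_in_open_segment[of "u + (-t) *\<^sub>R d" "u + t *\<^sub>R d"] ne mid by metis
  then show False using ext o1 o2 unfolding extreme_point_of_def by blast
qed

lemma exists_opt_bfs:
  fixes u0 :: "real^'m"
  assumes "lp_feasible k \<gamma> vs r L z u0"
  shows "\<exists>ub. lp_optimal c k \<gamma> vs r L z ub \<and> lp_bfs k \<gamma> vs r L z ub"
proof -
  let ?P = "{u. lp_feasible k \<gamma> vs r L z u}"
  obtain x0 where x0: "x0 \<in> ?P" "\<forall>y\<in>?P. c \<bullet> x0 \<le> c \<bullet> y"
    using continuous_attains_inf[of ?P "\<lambda>u. c \<bullet> u"] lp_compact[of k \<gamma> vs r L z] assms
      continuous_on_inner[OF continuous_on_const continuous_on_id, of ?P c]
    by blast
  have O: "{x. lp_optimal c k \<gamma> vs r L z x} = ?P \<inter> {x. c \<bullet> x \<le> c \<bullet> x0}"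
    using x0 by (force simp: lp_optimal_def)
  have "compact {x. lp_optimal c k \<gamma> vs r L z x}"
    unfolding O by (intro compact_Int_closed lp_compact closed_halfspace_le)
  moreover have "convex {x. lp_optimal c k \<gamma> vs r L z x}"
    unfolding O by (intro convex_Int lp_convex convex_halfspace_le)
  moreover have "{x. lp_optimal c k \<gamma> vs r L z x} \<noteq> {}"
    unfolding O using x0 by auto
  ultimately obtain ub where ub: "ub extreme_point_of {x. lp_optimal c k \<gamma> vs r L z x}"
    by (rule extreme_point_exists_convex)
  then have o: "lp_optimal c k \<gamma> vs r L z ub" by (simp add: extreme_point_of_def)
  then show ?thesis using extreme_bfs[OF o ub] by (auto simp: lp_bfs_def lp_optimal_def)
qed

lemma bfs_card:
  fixes ub :: "real^'m"
  assumes bfs: "lp_bfs k \<gamma> vs r L z ub"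
  shows "card {i. ub $ i \<noteq> 0 \<and> ub $ i \<noteq> 1} \<le> r + 2"
proof -
  let ?N = "{i. ub $ i = 0 \<or> ub $ i = 1}"
  let ?S = "{i. ub $ i \<noteq> 0 \<and> ub $ i \<noteq> 1}"
  let ?E = "(\<lambda>j. \<chi> i. L j i * vs $ i) ` {..<r}"
  let ?B = "(\<lambda>i. axis i (1::real)) ` ?N"
  let ?R = "?E \<union> {\<chi> i. 1} \<union> {\<chi> i. (vs $ i)^2} \<union> ?B"
  have sub: "lp_active_normals k \<gamma> vs r L ub \<subseteq> ?R"
    unfolding lp_active_normals_def by auto
  have fin: "finite ?R" by simp
  have sp: "span (lp_active_normals k \<gamma> vs r L ub) = UNIV" using bfs by (simp add: lp_bfs_def)
  have "CARD('m) = dim (UNIV :: (real^'m) set)" by simp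
  also have "\<dots> \<le> card (lp_active_normals k \<gamma> vs r L ub)"
    by (rule dim_le_card) (use sp finite_subset[OF sub fin] in auto)
  also have "\<dots> \<le> card ?R" by (rule card_mono[OF fin sub])
  also have "\<dots> \<le> card ?E + 1 + 1 + card ?B"
    by (rule order_trans[OF card_Un_le]) (use card_Un_le[of "?E \<union> {\<chi> i. 1}" "{\<chi> i. (vs $ i)^2}"]
        card_Un_le[of "?E" "{\<chi> i. 1}"] in auto)
  also have "\<dots> \<le> r + 2 + card ?N"
    using card_image_le[of "{..<r}" "\<lambda>j. \<chi> i. L j i * vs $ i"] card_image_le[of ?N "\<lambda>i. axis i (1::real)"]
    by simp
  finally have *: "CARD('m) \<le> r + 2 + card ?N" .
  have "card ?S + card ?N = CARD('m)"
    by (subst card_Un_disjoint[symmetric]) (auto intro: arg_cong[where f=card])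
  with * show ?thesis by linarith
qed

lemma l0_bound:
  fixes ub :: "real^'m"
  assumes bfs: "lp_bfs (real k) \<gamma> vs r L z ub"
  shows "l0norm (round_point ub vs) \<le> k + r + 2"
proof -
  let ?S = "{i. ub $ i \<noteq> 0 \<and> ub $ i \<noteq> 1}"
  let ?O = "{i. ub $ i = 1}"
  have feas: "lp_feasible (real k) \<gamma> vs r L z ub" using bfs by (simp add: lp_bfs_def)
  have "real (card ?O) = (\<Sum>i\<in>?O. ub $ i)" by simp
  also have "\<dots> \<le> (\<Sum>i\<in>UNIV. ub $ i)"
    by (rule sum_mono2) (use feas in \<open>auto simp: lp_feasible_def\<close>)
  also have "\<dots> \<le> real k" using feas by (simp add: lp_feasible_def)
  finally have O: "card ?O \<le> k" by simp
  have "l0norm (round_point ub vs) \<le> card (?S \<union> ?O)"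
    unfolding l0norm_def round_point_nth by (rule card_mono) auto
  also have "\<dots> \<le> card ?S + card ?O" by (rule card_Un_le)
  finally show ?thesis using O bfs_card[OF bfs] by linarith
qed

lemma norm_bound:
  fixes ub :: "real^'m"
  assumes feas: "lp_feasible k \<gamma> vs r L z ub"
  shows "(norm (round_point ub vs))^2 \<le> \<gamma>"
proof -
  have "(norm (round_point ub vs))^2 = (\<Sum>i\<in>UNIV. (ub $ i * vs $ i)^2)"
    unfolding power2_norm_eq_inner by (simp add: inner_vec_def round_point_nth power2_eq_square)
  also have "\<dots> \<le> (\<Sum>i\<in>UNIV. ub $ i * (vs $ i)^2)"
  proof (rule sum_mono)
    fix i
    have "0 \<le> ub $ i" "ub $ i \<le> 1" using feas by (auto simp: lp_feasible_def)
    then have "(ub $ i)^2 \<le> ub $ i" by (simp add: power2_eq_square mult_left_le)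
    then show "(ub $ i * vs $ i)^2 \<le> ub $ i * (vs $ i)^2"
      by (simp add: power_mult_distrib mult_right_mono)
  qed
  also have "\<dots> \<le> \<gamma>" using feas by (simp add: lp_feasible_def)
  finally show ?thesis .
qed

lemma biconj_le: "biconj_fun f x \<le> f x"
  unfolding biconj_fun_def conj_fun_def[of "conj_fun f"]
proof (rule SUP_least)
  fix y
  have c: "ereal (x \<bullet> y) - f x \<le> conj_fun f y" unfolding conj_fun_def by (rule SUP_upper) simp
  show "ereal (y \<bullet> x) - conj_fun f y \<le> f x"
  proof (cases "f x")
    case (real a)
    have "ereal (y \<bullet> x) - conj_fun f y \<le> ereal (y \<bullet> x) - (ereal (x \<bullet> y) - f x)"
      by (rule ereal_minus_mono[OF order_refl c])
    also have "\<dots> = f x" using real by (simp add: inner_commute)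
    finally show ?thesis .
  next
    case PInf then show ?thesis by simp
  next
    case MInf
    then have "conj_fun f y = \<infinity>" using c by simp
    then show ?thesis by simp
  qed
qed

lemma rho_nonneg:
  assumes "\<forall>x. f x \<noteq> -\<infinity>"
  shows "0 \<le> rho f X"
  unfolding rho_def
proof (rule SUP_upper2[of 0])
  let ?a = "f (X *v 0)" and ?b = "biconj_fun f (X *v 0)"
  have "?b \<le> ?a" by (rule biconj_le)
  moreover have "?a \<noteq> -\<infinity>" using assms by simp
  ultimately show "0 \<le> (if ?a = \<infinity> \<and> ?b = \<infinity> then 0 else ?a - ?b)"
    by (cases ?a; cases ?b) auto
qed simp

lemma relax_le_con:
  fixes X :: "real^'m^'n"
  shows "p_relax f X \<gamma> k \<le> p_con f X \<gamma> k"
  unfolding p_relax_def p_con_def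
proof (rule INF_mono)
  fix w :: "real^'m" assume "w \<in> {w. l0norm w \<le> k \<and> (norm w)^2 \<le> \<gamma>}"
  then have w: "l0norm w \<le> k" "(norm w)^2 \<le> \<gamma>" by auto
  define u :: "real^'m" where "u = (\<chi> i. if w $ i \<noteq> 0 then 1 else 0)"
  have Dw: "diagm u *v w = w" by (simp add: vec_eq_iff diagm_nth u_def)
  have "(\<Sum>i\<in>UNIV. u $ i) = real (card {i. w $ i \<noteq> 0})"
    by (simp add: u_def sum.If_cases)
  also have "\<dots> \<le> real k" using w(1) by (simp add: l0norm_def)
  finally have s: "(\<Sum>i\<in>UNIV. u $ i) \<le> real k" .
  have "w \<bullet> (diagm u *v w) = (norm w)^2" by (simp add: Dw power2_norm_eq_inner)
  then have "relax_feasible (real k) \<gamma> w u"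
    using s w(2) by (simp add: relax_feasible_def u_def)
  then show "\<exists>n\<in>{(v, u). relax_feasible (real k) \<gamma> v u}. (case n of (v, u) \<Rightarrow> f (X *v (diagm u *v v))) \<le> f (X *v w)"
    by (intro bexI[of _ "(w, u)"]) (auto simp: Dw)
qed

lemma main_gen:
  fixes X :: "real^'m^'n" and f :: "real^'n \<Rightarrow> ereal"
  assumes f: "\<forall>x. f x \<noteq> -\<infinity>"
    and feas: "lp_feasible (real k) \<gamma> vs r L z us"
    and Xeq: "\<And>ub. lp_feasible (real k) \<gamma> vs r L z ub \<Longrightarrow> X *v round_point ub vs = X *v (diagm us *v vs)"
    and opt: "\<forall>v u. relax_feasible (real k) \<gamma> v u \<longrightarrow>
                 f (X *v (diagm us *v vs)) \<le> f (X *v (diagm u *v v))"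
  shows "(\<exists>ub. lp_optimal c (real k) \<gamma> vs r L z ub \<and> lp_bfs (real k) \<gamma> vs r L z ub) \<and>
        (\<forall>ub. lp_optimal c (real k) \<gamma> vs r L z ub \<and> lp_bfs (real k) \<gamma> vs r L z ub \<longrightarrow>
           (let w = round_point ub vs; OPT = f (X *v w)
            in p_con f X \<gamma> (k + r + 2) - rho f X \<le> OPT \<and>
               OPT \<le> p_relax f X \<gamma> k \<and> p_relax f X \<gamma> k \<le> p_con f X \<gamma> k))"
proof (intro conjI allI impI)
  show "\<exists>ub. lp_optimal c (real k) \<gamma> vs r L z ub \<and> lp_bfs (real k) \<gamma> vs r L z ub"
    by (rule exists_opt_bfs[OF feas])
next
  fix ub assume ub: "lp_optimal c (real k) \<gamma> vs r L z ub \<and> lp_bfs (real k) \<gamma> vs r L z ub"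
  then have fe: "lp_feasible (real k) \<gamma> vs r L z ub" and bfs: "lp_bfs (real k) \<gamma> vs r L z ub"
    by (auto simp: lp_optimal_def)
  define w where "w = round_point ub vs"
  have O: "f (X *v w) = f (X *v (diagm us *v vs))" using Xeq[OF fe] by (simp add: w_def)
  have r1: "f (X *v w) \<le> p_relax f X \<gamma> k"
    unfolding p_relax_def O by (rule INF_greatest) (use opt in auto)
  have "w \<in> {w. l0norm w \<le> k + r + 2 \<and> (norm w)^2 \<le> \<gamma>}"
    using l0_bound[OF bfs] norm_bound[OF fe] by (simp add: w_def)
  then have "p_con f X \<gamma> (k + r + 2) \<le> f (X *v w)"
    unfolding p_con_def by (rule INF_lower)
  moreover have "p_con f X \<gamma> (k + r + 2) - rho f X \<le> p_con f X \<gamma> (k + r + 2)"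
    using rho_nonneg[OF f, of X]
    by (cases "p_con f X \<gamma> (k + r + 2)"; cases "rho f X") auto
  ultimately have r0: "p_con f X \<gamma> (k + r + 2) - rho f X \<le> f (X *v w)" by (rule order_trans[rotated])
  show "let w = round_point ub vs; OPT = f (X *v w)
            in p_con f X \<gamma> (k + r + 2) - rho f X \<le> OPT \<and>
               OPT \<le> p_relax f X \<gamma> k \<and> p_relax f X \<gamma> k \<le> p_con f X \<gamma> k"
    using r0 r1 relax_le_con[of f X \<gamma> k] unfolding Let_def w_def by simp
qed

theorem corollary4p1:
  fixes f :: "real^'n \<Rightarrow> ereal"
    and X :: "real^'m^'n"
    and r :: nat and U :: "nat \<Rightarrow> real^'n" and \<sigma> :: "nat \<Rightarrow> real" and V :: "nat \<Rightarrow> real^'m"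
    and \<gamma> :: real and k :: nat
    and vs us :: "real^'m"
  assumes f: "closed_convex_fun f"
    and rk: "rank X = r"
    and svd: "compact_svd X r U \<sigma> V"
    and \<gamma>: "\<gamma> > 0"
    and opt_feas: "relax_feasible (real k) \<gamma> vs us"
    and opt: "\<forall>v u. relax_feasible (real k) \<gamma> v u \<longrightarrow>
                 f (X *v (diagm us *v vs)) \<le> f (X *v (diagm u *v v))"
  shows "AE c in std_gaussian.
    (let L = (\<lambda>j i. \<sigma> j * V j $ i);
         z = (\<lambda>j. \<Sum>i\<in>UNIV. L j i * (diagm us *v vs) $ i)
     in (\<exists>ub. lp_optimal c (real k) \<gamma> vs r L z ub \<and> lp_bfs (real k) \<gamma> vs r L z ub) \<and>
        (\<forall>ub. lp_optimal c (real k) \<gamma> vs r L z ub \<and> lp_bfs (real k) \<gamma> vs r L z ub \<longrightarrow>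
           (let w = round_point ub vs; OPT = f (X *v w)
            in p_con f X \<gamma> (k + r + 2) - rho f X \<le> OPT \<and>
               OPT \<le> p_relax f X \<gamma> k \<and> p_relax f X \<gamma> k \<le> p_con f X \<gamma> k)))"
proof -
  define L where "L = (\<lambda>j i. \<sigma> j * V j $ i)"
  define z where "z = (\<lambda>j. \<Sum>i\<in>UNIV. L j i * (diagm us *v vs) $ i)"
  have fneq: "\<forall>x. f x \<noteq> -\<infinity>" using f by (simp add: closed_convex_fun_def)
  have feas: "lp_feasible (real k) \<gamma> vs r L z us"
    using opt_feas unfolding lp_feasible_def relax_feasible_def z_def
    by (auto simp: inner_vec_def diagm_nth power2_eq_square mult.commute mult.left_commute)
  have Xeq: "X *v round_point ub vs = X *v (diagm us *v vs)"
    if fe: "lp_feasible (real k) \<gamma> vs r L z ub" for ub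
  proof -
    have "(\<Sum>b\<in>UNIV. \<sigma> j * V j $ b * round_point ub vs $ b) =
          (\<Sum>b\<in>UNIV. \<sigma> j * V j $ b * (diagm us *v vs) $ b)" if "j < r" for j
      using fe that unfolding lp_feasible_def z_def L_def round_point_nth
      by (auto simp: mult.commute mult.left_commute)
    then show ?thesis
      by (simp add: vec_eq_iff svd_mult[OF svd])
  qed
  have key: "\<And>c. (\<exists>ub. lp_optimal c (real k) \<gamma> vs r L z ub \<and> lp_bfs (real k) \<gamma> vs r L z ub) \<and>
        (\<forall>ub. lp_optimal c (real k) \<gamma> vs r L z ub \<and> lp_bfs (real k) \<gamma> vs r L z ub \<longrightarrow>
           (let w = round_point ub vs; OPT = f (X *v w)
            in p_con f X \<gamma> (k + r + 2) - rho f X \<le> OPT \<and>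
               OPT \<le> p_relax f X \<gamma> k \<and> p_relax f X \<gamma> k \<le> p_con f X \<gamma> k))"
    by (rule main_gen[OF fneq feas Xeq opt])
  show ?thesis
    by (rule AE_I2) (unfold Let_def[of "\<lambda>j i. \<sigma> j * V j $ i"], unfold Let_def[of "\<lambda>j. \<Sum>i\<in>UNIV. \<sigma> j * V j $ i * (diagm us *v vs) $ i"],
      rule key[unfolded L_def z_def])
qed

end
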